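(* Let $D$ be an $m$-Dyck path of order $\ell$. The frieze pattern $F_{\mathsf{rtn}(D)}$ satisfies \[ F_{\mathsf{rtn}(D)}(i-1,i+1) = (\text{up}_D(i) + \text{bal}_D(i)+1) \lambda_{m+2} \] for all $0 \leq i \leq m\ell + 1$.
   Context: An $m$-Dyck path of order $\ell$ is a lattice path of up steps $(0,1)$ and right steps $(1,0)$ from $(0,0)$ to $(m\ell,\ell)$ staying above the line $y = x/m$. A lattice point of the path is a corner if it is incident to both an up step and a right step; otherwise it is a non-corner. The balance lines of $D$ form a multiset of $\ell-1$ lines of slope $1/m$, one through the lowest point of each up step except the first up step. A balance line starting at $(i,i')$ whose first intersection with a non-corner point of $D$ is at $(j,j')$ is labeled $(i,j+1)$. The map $\mathsf{rtn}$ sends $D$ to the $(m+2)$-angulation of the polygon $P_{m\ell+2}$ (vertices $v_0,\ldots,v_{m\ell+1}$ labeled clockwise) consisting of the diagonals $(v_i,v_j)$ for all labels $(i,j)$ of balance lines of $D$. For $0 \le i \le m\ell+1$, $\text{up}_D(i)$ is the number of up steps of the form $(i,j)-(i,j+1)$ with $j>0$ in $D$, and $\text{bal}_D(i)$ is the number of balance lines whose first intersection with a non-corner point of $D$ is at a point $(i-1,j)$. $\lambda_p = 2\cos(\pi/p)$. For a dissection $T$ of a polygon $P_N$, $F_T$ is the (finite) frieze pattern — a function $F$ on $\{(i,j): 0 \le j-i \le N\}$ with $F(i,i)=F(i,i+N)=0$, $F(i,i+1)=F(i,i+N-1)=1$, and $F(i-1,j)F(i,j+1)-F(i,j)F(i+1,j+1)=1$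 — determined by the quiddity row $F_T(i-1,i+1)=\sum_{p\ge 3}\mu_p(\overline{i})\lambda_p$, where $\mu_p(\overline{i})$ is the number of $p$-gons of $T$ incident to the vertex $v_{i \bmod N}$. *)

theory Defs
  imports Complex_Main
begin

text \<open>A lattice path is a list of steps: True = up step (0,1), False = right step (1,0).
  The k-th lattice point (0 \<le> k \<le> length D) is the point reached after the first k steps.\<close>

definition xc :: "bool list \<Rightarrow> nat \<Rightarrow> int" where
  "xc D k = int (length (filter Not (take k D)))"

definition yc :: "bool list \<Rightarrow> nat \<Rightarrow> int" where
  "yc D k = int (length (filter id (take k D)))"

definition dyck_path :: "nat \<Rightarrow> nat \<Rightarrow> bool list \<Rightarrow> bool" where
  "dyck_path m l D \<longleftrightarrow> length (filter id D) = l \<and> length (filter Not D) = m * l \<and>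
     (\<forall>k \<le> length D. xc D k \<le> int m * yc D k)"

text \<open>Lattice point k is a corner iff it is incident to both an up step and a right step.\<close>
definition corner :: "bool list \<Rightarrow> nat \<Rightarrow> bool" where
  "corner D k \<longleftrightarrow> 0 < k \<and> k < length D \<and> D ! (k - 1) \<noteq> D ! k"

definition first_up :: "bool list \<Rightarrow> nat" where
  "first_up D = (LEAST k. k < length D \<and> D ! k)"

text \<open>Up steps (given by their step index s) carrying a balance line: all up steps except the
  first one. The balance line goes through the lowest point of the step, i.e. lattice point s.\<close>
definition bal_steps :: "bool list \<Rightarrow> nat set" where
  "bal_steps D = {s. s < length D \<and> D ! s \<and> s \<noteq> first_up D}"

text \<open>Index of the first (going along the line, away from its start) lattice point of D lying on
  the balance line of slope 1/m through lattice point s that is a non-corner.\<close>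
definition bal_hit :: "nat \<Rightarrow> bool list \<Rightarrow> nat \<Rightarrow> nat" where
  "bal_hit m D s = (LEAST k. s < k \<and> k \<le> length D \<and> \<not> corner D k \<and>
      int m * (yc D k - yc D s) = xc D k - xc D s)"

text \<open>Label (i, j+1) of the balance line starting at (i,i') and first hitting a non-corner at (j,j').\<close>
definition bal_label :: "nat \<Rightarrow> bool list \<Rightarrow> nat \<Rightarrow> int \<times> int" where
  "bal_label m D s = (xc D s, xc D (bal_hit m D s) + 1)"

definition rtn :: "nat \<Rightarrow> bool list \<Rightarrow> (int \<times> int) set" where
  "rtn m D = bal_label m D ` bal_steps D"

definition up_D :: "bool list \<Rightarrow> int \<Rightarrow> nat" where
  "up_D D i = card {k. k < length D \<and> D ! k \<and> xc D k = i \<and> yc D k > 0}"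

text \<open>Balance lines counted with multiplicity (one per non-first up step).\<close>
definition bal_D :: "nat \<Rightarrow> bool list \<Rightarrow> int \<Rightarrow> nat" where
  "bal_D m D i = card {s \<in> bal_steps D. xc D (bal_hit m D s) = i - 1}"

text \<open>Vertices of P_N are 0..N-1 (v_0..v_{N-1}, clockwise). A diagonal (a,b) separates u and w
  if one of them lies strictly between a and b and the other strictly outside.\<close>
definition separates :: "int \<times> int \<Rightarrow> int \<Rightarrow> int \<Rightarrow> bool" where
  "separates d u w \<longleftrightarrow> (let lo = min (fst d) (snd d); hi = max (fst d) (snd d) in
     (lo < u \<and> u < hi \<and> (w < lo \<or> hi < w)) \<or> (lo < w \<and> w < hi \<and> (u < lo \<or> hi < u)))"

definition unsep :: "(int \<times> int) set \<Rightarrow> int set \<Rightarrow> bool" where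
  "unsep T S \<longleftrightarrow> (\<forall>d\<in>T. \<forall>u\<in>S. \<forall>w\<in>S. \<not> separates d u w)"

text \<open>The pieces (polygons) of the dissection T, given by their vertex sets: the maximal sets of
  vertices not separated by any diagonal of T.\<close>
definition cells :: "nat \<Rightarrow> (int \<times> int) set \<Rightarrow> int set set" where
  "cells N T = {S. S \<subseteq> {0..<int N} \<and> unsep T S \<and>
       (\<forall>S'. S \<subseteq> S' \<and> S' \<subseteq> {0..<int N} \<and> unsep T S' \<longrightarrow> S' = S)}"

definition mu :: "nat \<Rightarrow> (int \<times> int) set \<Rightarrow> nat \<Rightarrow> int \<Rightarrow> nat" where
  "mu N T p v = card {C \<in> cells N T. card C = p \<and> v \<in> C}"

definition lam :: "nat \<Rightarrow> real" where
  "lam p = 2 * cos (pi / real p)"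

text \<open>Quiddity entry c_i = F_T(i-1,i+1) = sum over p \<ge> 3 of mu_p(i mod N) lambda_p
  (pieces have at most N vertices).\<close>
definition quiddity :: "nat \<Rightarrow> (int \<times> int) set \<Rightarrow> int \<Rightarrow> real" where
  "quiddity N T i = (\<Sum>p\<in>{3..N}. real (mu N T p (i mod int N)) * lam p)"

text \<open>Frieze entries F(i, i+d) generated from the quiddity row by the recurrence
  F(i,i)=0, F(i,i+1)=1, F(i,j+1) = c_j F(i,j) - F(i,j-1).\<close>
fun frieze_aux :: "(int \<Rightarrow> real) \<Rightarrow> int \<Rightarrow> nat \<Rightarrow> real" where
  "frieze_aux c i 0 = 0"
| "frieze_aux c i (Suc 0) = 1"
| "frieze_aux c i (Suc (Suc d)) =
     c (i + int d + 1) * frieze_aux c i (Suc d) - frieze_aux c i d"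

definition frieze :: "nat \<Rightarrow> (int \<times> int) set \<Rightarrow> int \<Rightarrow> int \<Rightarrow> real" where
  "frieze N T i j = frieze_aux (quiddity N T) i (nat (j - i))"

end

theory Submission
  imports Defs
begin

definition phi :: "int \<Rightarrow> nat \<Rightarrow> int \<Rightarrow> int" where
  "phi a m v = (if v \<le> a then v else v + int m)"

definition phip :: "int \<Rightarrow> nat \<Rightarrow> int \<times> int \<Rightarrow> int \<times> int" where
  "phip a m d = (phi a m (fst d), phi a m (snd d))"

lemma phi_less[simp]: "phi a m u < phi a m w \<longleftrightarrow> u < w"
  by (auto simp: phi_def)
lemma phi_le[simp]: "phi a m u \<le> phi a m w \<longleftrightarrow> u \<le> w"
  by (auto simp: phi_def)
lemma phi_eq[simp]: "phi a m u = phi a m w \<longleftrightarrow> u = w"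
  by (auto simp: phi_def)
lemma inj_phi: "inj (phi a m)" by (auto intro: injI)

lemma sep_phi: "separates (phip a m d) (phi a m u) (phi a m w) = separates d u w"
proof -
  have "min (phi a m (fst d)) (phi a m (snd d)) = phi a m (min (fst d) (snd d))"
    by (simp add: min_def)
  moreover have "max (phi a m (fst d)) (phi a m (snd d)) = phi a m (max (fst d) (snd d))"
    by (simp add: max_def)
  ultimately show ?thesis by (simp add: separates_def phip_def Let_def)
qed

lemma sep_ear_phi: "\<not> separates (a, a + int m + 1) (phi a m u) (phi a m w)"
  by (auto simp: separates_def phi_def Let_def)

lemma unsep_T_phi:
  "unsep (insert (a, a + int m + 1) (phip a m ` T')) (phi a m ` S) \<longleftrightarrow> unsep T' S"
  by (auto simp: unsep_def sep_phi sep_ear_phi)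

lemma unsep_split:
  assumes "unsep (insert (a, a + int m + 1) X) S"
  shows "S \<subseteq> {a..a + int m + 1} \<or> (\<forall>v\<in>S. v \<le> a \<or> a + int m + 1 \<le> v)"
proof (rule ccontr)
  assume H: "\<not> ?thesis"
  then have "\<not> S \<subseteq> {a..a + int m + 1}" by blast
  then obtain u where u0: "u \<in> S" "u \<notin> {a..a + int m + 1}" by blast
  then have u: "u \<in> S" "\<not> (a \<le> u \<and> u \<le> a + int m + 1)" by auto
  from H have "\<not> (\<forall>v\<in>S. v \<le> a \<or> a + int m + 1 \<le> v)" by blast
  then obtain w where w0: "w \<in> S" "\<not> (w \<le> a \<or> a + int m + 1 \<le> w)" by blast
  then have w: "w \<in> S" "a < w" "w < a + int m + 1" by auto
  note uw = u w
  then have "separates (a, a + int m + 1) w u" by (auto simp: separates_def)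
  with assms uw show False by (auto simp: unsep_def)
qed

lemma unsep_E: "unsep (insert (a, a + int m + 1) (phip a m ` T')) {a..a + int m + 1}"
  unfolding unsep_def
proof (intro ballI)
  fix d u w assume d: "d \<in> insert (a, a + int m + 1) (phip a m ` T')"
    and u: "u \<in> {a..a + int m + 1}" and w: "w \<in> {a..a + int m + 1}"
  show "\<not> separates d u w"
  proof (cases "d = (a, a + int m + 1)")
    case True then show ?thesis using u w by (auto simp: separates_def)
  next
    case False
    then obtain c e where d': "d = (phi a m c, phi a m e)" using d by (auto simp: phip_def)
    have "phi a m c \<le> a \<or> a + int m + 1 \<le> phi a m c" "phi a m e \<le> a \<or> a + int m + 1 \<le> phi a m e"
      by (auto simp: phi_def)
    then show ?thesis using u w d' by (auto simp: separates_def Let_def min_def max_def)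
  qed
qed

lemma phi_range: "0 \<le> a \<Longrightarrow> a < int N' \<Longrightarrow>
   (phi a m v \<in> {0..<int (N' + m)}) \<longleftrightarrow> v \<in> {0..<int N'}"
  by (auto simp: phi_def)

lemma phi_pre: "\<forall>v\<in>S. v \<le> a \<or> a + int m + 1 \<le> v \<Longrightarrow> phi a m ` {v. phi a m v \<in> S} = S"
proof (intro equalityI subsetI)
  fix x assume H: "\<forall>v\<in>S. v \<le> a \<or> a + int m + 1 \<le> v" and x: "x \<in> S"
  show "x \<in> phi a m ` {v. phi a m v \<in> S}"
  proof (cases "x \<le> a")
    case True then have "x = phi a m x" by (simp add: phi_def)
    then show ?thesis using x by (intro image_eqI[of _ _ x]) auto
  next
    case False then have "x = phi a m (x - int m)" using H x by (auto simp: phi_def)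
    then show ?thesis using x by (intro image_eqI[of _ _ "x - int m"]) auto
  qed
qed auto

lemma ear_cells:
  fixes T' :: "(int \<times> int) set" and N' m :: nat and a :: int
  assumes m1: "1 \<le> m" and a0: "0 \<le> a" and aN: "a + 1 < int N'"
    and big: "\<forall>C\<in>cells N' T'. 3 \<le> card C"
  shows "cells (N' + m) (insert (a, a + int m + 1) (phip a m ` T'))
     = insert {a..a + int m + 1} ((\<lambda>C. phi a m ` C) ` cells N' T')"
proof -
  define T where "T = insert (a, a + int m + 1) (phip a m ` T')"
  have Er: "{a..a + int m + 1} \<subseteq> {0..<int (N'+m)}" using a0 aN by auto
  have Eu: "unsep T {a..a + int m + 1}" unfolding T_def by (rule unsep_E)
  have rng: "\<And>S0. phi a m ` S0 \<subseteq> {0..<int (N'+m)} \<longleftrightarrow> S0 \<subseteq> {0..<int N'}"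
    using phi_range[OF a0, of N' m] aN by (auto simp: image_subset_iff) 
  have uT: "\<And>S0. unsep T (phi a m ` S0) \<longleftrightarrow> unsep T' S0"
    unfolding T_def by (rule unsep_T_phi)
  have "cells (N' + m) T = insert {a..a + int m + 1} ((\<lambda>C. phi a m ` C) ` cells N' T')"
  proof (intro equalityI subsetI)
    fix S assume S: "S \<in> cells (N' + m) T"
    then have Sr: "S \<subseteq> {0..<int (N'+m)}" and Su: "unsep T S"
      and Smax: "\<And>S'. S \<subseteq> S' \<Longrightarrow> S' \<subseteq> {0..<int (N'+m)} \<Longrightarrow> unsep T S' \<Longrightarrow> S' = S"
      by (auto simp: cells_def)
    from unsep_split[OF Su[unfolded T_def]]
    show "S \<in> insert {a..a + int m + 1} ((\<lambda>C. phi a m ` C) ` cells N' T')"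
    proof
      assume "S \<subseteq> {a..a + int m + 1}"
      then have "{a..a + int m + 1} = S" using Smax Er Eu by blast
      then show ?thesis by simp
    next
      assume H: "\<forall>v\<in>S. v \<le> a \<or> a + int m + 1 \<le> v"
      define S0 where "S0 = {v. phi a m v \<in> S}"
      have SS0: "phi a m ` S0 = S" using phi_pre[OF H] S0_def by simp
      have "S0 \<in> cells N' T'"
        unfolding cells_def
      proof (intro CollectI conjI allI impI)
        show "S0 \<subseteq> {0..<int N'}" using Sr rng SS0 by metis
        show "unsep T' S0" using Su SS0 uT by metis
        fix S1 assume S1: "S0 \<subseteq> S1 \<and> S1 \<subseteq> {0..<int N'} \<and> unsep T' S1"
        have "phi a m ` S1 = S"
          by (rule Smax) (use S1 SS0 rng uT in auto)
        then show "S1 = S0" using SS0 inj_image_eq_iff[OF inj_phi] by metis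
      qed
      then show ?thesis using SS0 by blast
    qed
  next
    fix S assume S: "S \<in> insert {a..a + int m + 1} ((\<lambda>C. phi a m ` C) ` cells N' T')"
    show "S \<in> cells (N' + m) T"
    proof (cases "S = {a..a + int m + 1}")
      case True
      show ?thesis unfolding cells_def True
      proof (intro CollectI conjI allI impI)
        show "{a..a + int m + 1} \<subseteq> {0..<int (N' + m)}" by (rule Er)
        show "unsep T {a..a + int m + 1}" by (rule Eu)
        fix S' assume S': "{a..a + int m + 1} \<subseteq> S' \<and> S' \<subseteq> {0..<int (N' + m)} \<and> unsep T S'"
        from unsep_split[OF S'[unfolded T_def, THEN conjunct2, THEN conjunct2]]
        show "S' = {a..a + int m + 1}"
        proof
          assume "\<forall>v\<in>S'. v \<le> a \<or> a + int m + 1 \<le> v"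
          moreover have "a + 1 \<in> S'" using S' m1 by auto
          ultimately show ?thesis using m1 by fastforce
        qed (use S' in auto)
      qed
    next
      case False
      then obtain C where C: "C \<in> cells N' T'" and SC: "S = phi a m ` C" using S by auto
      from C have Cr: "C \<subseteq> {0..<int N'}" and Cu: "unsep T' C"
        and Cmax: "\<And>S'. C \<subseteq> S' \<Longrightarrow> S' \<subseteq> {0..<int N'} \<Longrightarrow> unsep T' S' \<Longrightarrow> S' = C"
        by (auto simp: cells_def)
      show ?thesis unfolding cells_def SC
      proof (intro CollectI conjI allI impI)
        show "phi a m ` C \<subseteq> {0..<int (N' + m)}" using Cr rng by metis
        show "unsep T (phi a m ` C)" using Cu uT by metis
        fix S' assume S': "phi a m ` C \<subseteq> S' \<and> S' \<subseteq> {0..<int (N' + m)} \<and> unsep T S'"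
        from unsep_split[OF S'[unfolded T_def, THEN conjunct2, THEN conjunct2]]
        show "S' = phi a m ` C"
        proof
          assume SE: "S' \<subseteq> {a..a + int m + 1}"
          have "\<forall>c\<in>C. phi a m c \<in> {a..a + int m + 1}" using S' SE by blast
          then have "C \<subseteq> {a, a+1}"
          proof (intro subsetI)
            fix c assume "c \<in> C" "\<forall>c\<in>C. phi a m c \<in> {a..a + int m + 1}"
            then have "phi a m c \<in> {a..a + int m + 1}" by blast
            then show "c \<in> {a, a+1}" by (cases "c \<le> a") (auto simp: phi_def)
          qed
          then have "card C \<le> card {a, a+1}" by (intro card_mono) auto
          then have "card C \<le> 2" by simp
          then show ?thesis using big C by fastforce
        next
          assume H: "\<forall>v\<in>S'. v \<le> a \<or> a + int m + 1 \<le> v"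
          define S0 where "S0 = {v. phi a m v \<in> S'}"
          have SS0: "phi a m ` S0 = S'" using phi_pre[OF H] S0_def by simp
          have "S0 \<subseteq> {0..<int N'}" using S' SS0 rng by metis
          moreover have "unsep T' S0" using S' SS0 uT by metis
          moreover have "C \<subseteq> S0" using S' S0_def by auto
          ultimately have "S0 = C" using Cmax by blast
          then show ?thesis using SS0 by simp
        qed
      qed
    qed
  qed
  then show ?thesis unfolding T_def .
qed

lemma finite_cells: "finite (cells N T)"
proof -
  have "cells N T \<subseteq> Pow {0..<int N}" by (auto simp: cells_def)
  then show ?thesis by (rule finite_subset) simp
qed

lemma inj_on_img_phi: "inj_on (\<lambda>C. phi a m ` C) Z"
  by (auto intro: inj_onI simp: inj_image_eq_iff[OF inj_phi])

lemma ear_count: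
  fixes T' :: "(int \<times> int) set" and N' m :: nat and a :: int
  assumes m1: "1 \<le> m" and a0: "0 \<le> a" and aN: "a + 1 < int N'"
    and sz: "\<forall>C\<in>cells N' T'. card C = m + 2"
  shows "\<forall>C\<in>cells (N' + m) (insert (a, a + int m + 1) (phip a m ` T')). card C = m + 2"
    and "card {C \<in> cells (N' + m) (insert (a, a + int m + 1) (phip a m ` T')). phi a m w \<in> C}
          = (if w = a \<or> w = a + 1 then 1 else 0) + card {C \<in> cells N' T'. w \<in> C}"
    and "a < v \<Longrightarrow> v < a + int m + 1 \<Longrightarrow>
          card {C \<in> cells (N' + m) (insert (a, a + int m + 1) (phip a m ` T')). v \<in> C} = 1"
proof -
  have big: "\<forall>C\<in>cells N' T'. 3 \<le> card C" using sz m1 by auto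
  note eq = ear_cells[OF m1 a0 aN big]
  define K where "K = cells N' T'"
  define E where "E = {a..a + int m + 1}"
  have fK: "finite K" unfolding K_def by (rule finite_cells)
  have Enot: "E \<notin> (\<lambda>C. phi a m ` C) ` K"
  proof
    assume "E \<in> (\<lambda>C. phi a m ` C) ` K"
    then obtain C where "E = phi a m ` C" by blast
    moreover have "a + 1 \<in> E" using m1 by (simp add: E_def)
    ultimately obtain c where "a + 1 = phi a m c" by blast
    then show False using m1 by (auto simp: phi_def split: if_splits)
  qed
  have gen: "\<And>x. card {C \<in> insert E ((\<lambda>C. phi a m ` C) ` K). x \<in> C}
      = (if x \<in> E then 1 else 0) + card {C \<in> K. x \<in> phi a m ` C}"
  proof -
    fix x
    have s1: "{C \<in> insert E ((\<lambda>C. phi a m ` C) ` K). x \<in> C}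
       = (if x \<in> E then insert E else id) ((\<lambda>C. phi a m ` C) ` {C \<in> K. x \<in> phi a m ` C})"
      by auto
    have c2: "card ((\<lambda>C. phi a m ` C) ` {C \<in> K. x \<in> phi a m ` C}) = card {C \<in> K. x \<in> phi a m ` C}"
      by (rule card_image) (rule inj_on_img_phi)
    have fin: "finite ((\<lambda>C. phi a m ` C) ` {C \<in> K. x \<in> phi a m ` C})" using fK by auto
    have nin: "E \<notin> (\<lambda>C. phi a m ` C) ` {C \<in> K. x \<in> phi a m ` C}" using Enot by blast
    show "card {C \<in> insert E ((\<lambda>C. phi a m ` C) ` K). x \<in> C}
      = (if x \<in> E then 1 else 0) + card {C \<in> K. x \<in> phi a m ` C}"
      unfolding s1 using c2 fin nin by (simp add: card_insert_disjoint)
  qed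
  show "\<forall>C\<in>cells (N' + m) (insert (a, a + int m + 1) (phip a m ` T')). card C = m + 2"
  proof
    fix C assume "C \<in> cells (N' + m) (insert (a, a + int m + 1) (phip a m ` T'))"
    then have "C = E \<or> (\<exists>C'\<in>K. C = phi a m ` C')" unfolding eq E_def K_def by blast
    then show "card C = m + 2"
    proof
      assume "C = E" then show ?thesis unfolding E_def using a0 by simp
    next
      assume "\<exists>C'\<in>K. C = phi a m ` C'"
      then obtain C' where "C' \<in> K" "C = phi a m ` C'" by blast
      then show ?thesis using sz K_def card_image[OF inj_on_subset[OF inj_phi]] by auto
    qed
  qed
  have pw: "\<And>C. phi a m w \<in> phi a m ` C \<longleftrightarrow> w \<in> C" using inj_image_mem_iff[OF inj_phi] by blast
  have pE: "phi a m w \<in> E \<longleftrightarrow> w = a \<or> w = a + 1"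
    using m1 by (auto simp: E_def phi_def)
  show "card {C \<in> cells (N' + m) (insert (a, a + int m + 1) (phip a m ` T')). phi a m w \<in> C}
          = (if w = a \<or> w = a + 1 then 1 else 0) + card {C \<in> cells N' T'. w \<in> C}"
    unfolding eq using gen[of "phi a m w"] pw pE by (simp add: E_def K_def)
  assume v: "a < v" "v < a + int m + 1"
  have "\<And>C. v \<notin> phi a m ` C" using v by (auto simp: phi_def)
  then have "{C \<in> K. v \<in> phi a m ` C} = {}" by blast
  moreover have "v \<in> E" using v by (simp add: E_def)
  ultimately show "card {C \<in> cells (N' + m) (insert (a, a + int m + 1) (phip a m ` T')). v \<in> C} = 1"
    unfolding eq using gen[of v] by (simp only: E_def K_def) simp
qed


definition lev :: "nat \<Rightarrow> bool list \<Rightarrow> nat \<Rightarrow> int" where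
  "lev m D k = int m * yc D k - xc D k"

definition cand :: "nat \<Rightarrow> bool list \<Rightarrow> nat \<Rightarrow> nat \<Rightarrow> bool" where
  "cand m D t k \<longleftrightarrow> t < k \<and> k \<le> length D \<and> \<not> corner D k \<and> lev m D k = lev m D t"

lemma bal_hit_cand: "bal_hit m D t = (LEAST k. cand m D t k)"
  unfolding bal_hit_def cand_def lev_def by (rule arg_cong[where f=Least]) (auto simp: algebra_simps fun_eq_iff)

lemma xc_append: "xc (P @ Q) k = xc P k + xc Q (k - length P)"
  by (simp add: xc_def take_append)
lemma yc_append: "yc (P @ Q) k = yc P k + yc Q (k - length P)"
  by (simp add: yc_def take_append)
lemma xc_Cons: "xc (b # Q) k = (if k = 0 then 0 else (if b then 0 else 1) + xc Q (k - 1))"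
  by (cases k) (auto simp: xc_def)
lemma yc_Cons: "yc (b # Q) k = (if k = 0 then 0 else (if b then 1 else 0) + yc Q (k - 1))"
  by (cases k) (auto simp: yc_def)
lemma xc_rep: "xc (replicate n False) k = int (min k n)"
  by (simp add: xc_def)
lemma yc_rep: "yc (replicate n False) k = 0"
  by (simp add: yc_def)
lemma xc_ge: "length P \<le> k \<Longrightarrow> xc P k = xc P (length P)"
  by (simp add: xc_def)
lemma yc_ge: "length P \<le> k \<Longrightarrow> yc P k = yc P (length P)"
  by (simp add: yc_def)
lemma xc_Suc: "k < length D \<Longrightarrow> xc D (Suc k) = xc D k + (if D ! k then 0 else 1)"
  by (simp add: xc_def take_Suc_conv_app_nth)
lemma yc_Suc: "k < length D \<Longrightarrow> yc D (Suc k) = yc D k + (if D ! k then 1 else 0)"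
  by (simp add: yc_def take_Suc_conv_app_nth)
lemma lev_Suc: "k < length D \<Longrightarrow> lev m D (Suc k) = lev m D k + (if D ! k then int m else -1)"
  by (simp add: lev_def xc_Suc yc_Suc algebra_simps)
lemma xc_mono: "i \<le> j \<Longrightarrow> xc D i \<le> xc D j"
proof -
  assume "i \<le> j"
  then have "take j D = take i D @ take (j - i) (drop i D)"
    by (metis le_add_diff_inverse take_add)
  then show ?thesis unfolding xc_def by simp
qed

lemma below_cand:
  assumes m1: "1 \<le> m" and tl: "t < length D" and Dt: "D ! t"
    and j: "t < j" "j \<le> length D" "lev m D j < lev m D t"
  shows "\<exists>k. k < j \<and> cand m D t k \<and> \<not> D ! (k - 1) \<and> k < length D \<and> \<not> D ! k"
proof -
  define Q where "Q = (\<lambda>j. t < j \<and> j \<le> length D \<and> lev m D j < lev m D t)"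
  define j0 where "j0 = (LEAST j. Q j)"
  have j0: "Q j0" unfolding j0_def by (rule LeastI[of _ j]) (use j Q_def in auto)
  have j0j: "j0 \<le> j" unfolding j0_def by (rule Least_le) (use j Q_def in auto)
  have mn: "\<And>i. t < i \<Longrightarrow> i < j0 \<Longrightarrow> lev m D t \<le> lev m D i"
  proof -
    fix i assume i: "t < i" "i < j0"
    then have "\<not> Q i" unfolding j0_def using not_less_Least by blast
    then show "lev m D t \<le> lev m D i" using i j0 Q_def by auto
  qed
  have st: "lev m D (Suc t) = lev m D t + int m" using lev_Suc[OF tl] Dt by simp
  have "j0 \<noteq> Suc t" using j0 st Q_def by auto
  then have j2: "Suc (Suc t) \<le> j0" using j0 Q_def by auto
  define k where "k = j0 - 1"
  have kj: "Suc k = j0" "t < k" "k < length D" using j2 j0 Q_def k_def by auto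
  have lk: "lev m D t \<le> lev m D k" using mn kj by auto
  have stepk: "lev m D j0 = lev m D k + (if D ! k then int m else -1)" using lev_Suc[OF kj(3)] kj by simp
  have Dk: "\<not> D ! k" using stepk lk j0 Q_def by (auto split: if_splits)
  have lkt: "lev m D k = lev m D t" using stepk Dk lk j0 Q_def by auto
  have "k \<noteq> Suc t" using lkt st m1 by auto
  then have k2: "t < k - 1" "k - 1 < j0" "Suc (k - 1) = k" using kj by auto
  have lk1: "lev m D t \<le> lev m D (k - 1)" using mn k2 by auto
  have "lev m D k = lev m D (k - 1) + (if D ! (k - 1) then int m else -1)"
    using lev_Suc[of "k - 1" D m] k2 kj by simp
  then have Dk1: "\<not> D ! (k - 1)" using lk1 lkt m1 by (auto split: if_splits)
  have "\<not> corner D k" using Dk Dk1 by (auto simp: corner_def)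
  then have "cand m D t k" using kj lkt by (auto simp: cand_def)
  then show ?thesis using Dk Dk1 kj j0j by (intro exI[of _ k]) auto
qed

lemma hit_props:
  assumes m1: "1 \<le> m" and tl: "t < length D" and Dt: "D ! t"
    and nn: "\<forall>k \<le> length D. 0 \<le> lev m D k" and e0: "lev m D (length D) = 0"
  shows "cand m D t (bal_hit m D t)" and "\<And>k. cand m D t k \<Longrightarrow> bal_hit m D t \<le> k"
    and "\<not> D ! (bal_hit m D t - 1)" and "bal_hit m D t < length D \<Longrightarrow> \<not> D ! (bal_hit m D t)"
proof -
  have ex: "\<exists>k. cand m D t k"
  proof (cases "\<exists>j. t < j \<and> j \<le> length D \<and> lev m D j < lev m D t")
    case True
    then show ?thesis using below_cand[OF m1 tl Dt] by blast
  next
    case False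
    then have "lev m D (length D) \<ge> lev m D t" using tl by force
    moreover have "0 \<le> lev m D t" using nn tl by simp
    ultimately have "lev m D (length D) = lev m D t" using e0 by linarith
    then have "cand m D t (length D)" using tl by (auto simp: cand_def corner_def)
    then show ?thesis by blast
  qed
  show c: "cand m D t (bal_hit m D t)" unfolding bal_hit_cand using ex by (rule LeastI_ex)
  show mn: "\<And>k. cand m D t k \<Longrightarrow> bal_hit m D t \<le> k" unfolding bal_hit_cand by (rule Least_le)
  define k where "k = bal_hit m D t"
  have st: "lev m D (Suc t) = lev m D t + int m" using lev_Suc[OF tl] Dt by simp
  have kk: "t < k" "k \<le> length D" "lev m D k = lev m D t" "\<not> corner D k"
    using c k_def by (auto simp: cand_def)
  have "k \<noteq> Suc t" using kk st m1 by auto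
  then have k2: "t < k - 1" "Suc (k - 1) = k" "k - 1 < length D" using kk by auto
  show D1: "\<not> D ! (bal_hit m D t - 1)"
  proof
    assume "D ! (bal_hit m D t - 1)"
    then have "lev m D k = lev m D (k - 1) + int m" using lev_Suc[of "k - 1" D m] k2 k_def by simp
    then have "lev m D (k - 1) < lev m D t" using kk m1 by simp
    then obtain k' where "k' < k - 1" "cand m D t k'" using below_cand[OF m1 tl Dt k2(1)] k2 by auto
    then show False using mn k_def by fastforce
  qed
  assume "bal_hit m D t < length D"
  then show "\<not> D ! (bal_hit m D t)" using kk D1 k_def k2 by (auto simp: corner_def)
qed

lemma hit_eq: "cand m D t k \<Longrightarrow> (\<And>y. y < k \<Longrightarrow> \<not> cand m D t y) \<Longrightarrow> bal_hit m D t = k"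
  unfolding bal_hit_cand by (rule Least_equality) (auto simp: not_less[symmetric])

lemma dyck_nn: "dyck_path m l D \<Longrightarrow> \<forall>k \<le> length D. 0 \<le> lev m D k"
  by (auto simp: dyck_path_def lev_def)

lemma xc_len: "xc D (length D) = int (length (filter Not D))" by (simp add: xc_def)
lemma yc_len: "yc D (length D) = int (length (filter id D))" by (simp add: yc_def)

lemma dyck_e0: "dyck_path m l D \<Longrightarrow> lev m D (length D) = 0"
  by (simp add: dyck_path_def lev_def xc_len yc_len)

lemma first_up_append:
  assumes "\<exists>k<length P. P ! k"
  shows "first_up (P @ Q) = first_up P"
proof -
  define k0 where "k0 = first_up P"
  have k0: "k0 < length P \<and> P ! k0" unfolding k0_def first_up_def using assms by (rule LeastI_ex)
  have mn: "\<And>y. y < length P \<Longrightarrow> P ! y \<Longrightarrow> k0 \<le> y" unfolding k0_def first_up_def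
    by (rule Least_le) simp
  have "(LEAST k. k < length (P @ Q) \<and> (P @ Q) ! k) = k0"
  proof (rule Least_equality)
    show "k0 < length (P @ Q) \<and> (P @ Q) ! k0" using k0 by (simp add: nth_append)
    fix y assume "y < length (P @ Q) \<and> (P @ Q) ! y"
    then show "k0 \<le> y" using mn k0 by (cases "y < length P") (auto simp: nth_append)
  qed
  then show ?thesis unfolding first_up_def[of "P @ Q"] k0_def .
qed


context
  fixes m l r :: nat and P :: "bool list"
  assumes m1: "1 \<le> m" and l1: "1 \<le> l" and dD': "dyck_path m l (P @ replicate r False)"
begin


lemma Pl: "length (filter id P) = l" using dD' by (simp add: dyck_path_def)
lemma Xr: "xc P (length P) + int r = int (m * l)"
proof -
  have "length (filter Not P) + r = m * l" using dD' by (simp add: dyck_path_def)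
  then have "int (length (filter Not P)) + int r = int (m * l)" by (metis of_nat_add)
  then show ?thesis by (simp add: xc_len)
qed
lemma YP: "yc P (length P) = int l" using Pl by (simp add: yc_len)
lemma levP: "lev m P (length P) = int r" using Xr YP by (simp add: lev_def)
lemma pp1: "1 \<le> length P" using Pl l1 by (cases P) auto

lemma xcD: "xc (P @ True # replicate (m + r) False) k = (if k \<le> length P then xc P k else xc P (length P) + int (min (k - length P - 1) (m + r)))"
  by (cases "k \<le> length P") (auto simp: xc_append xc_Cons xc_rep xc_ge[of P k])
lemma ycD: "yc (P @ True # replicate (m + r) False) k = (if k \<le> length P then yc P k else int l + 1)"
  using YP by (cases "k \<le> length P") (auto simp: yc_append yc_Cons yc_rep yc_ge[of P k])
lemma xcD': "xc (P @ replicate r False) k = (if k \<le> length P then xc P k else xc P (length P) + int (min (k - length P) r))"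
  by (cases "k \<le> length P") (auto simp: xc_append xc_rep xc_ge[of P k])
lemma ycD': "yc (P @ replicate r False) k = (if k \<le> length P then yc P k else int l)"
  using YP by (cases "k \<le> length P") (auto simp: yc_append yc_rep yc_ge[of P k])
lemma levD: "lev m (P @ True # replicate (m + r) False) k = (if k \<le> length P then lev m P k else int r + int m - int (min (k - length P - 1) (m + r)))"
proof (cases "k \<le> length P")
  case True then show ?thesis by (simp add: lev_def xcD ycD)
next
  case False
  have "int m * (int l + 1) - (xc P (length P) + int (min (k - length P - 1) (m + r)))
     = int r + int m - int (min (k - length P - 1) (m + r))"
    using Xr by (simp add: algebra_simps)
  then show ?thesis using False by (simp add: lev_def xcD ycD)
qed
lemma levD': "lev m (P @ replicate r False) k = (if k \<le> length P then lev m P k else int r - int (min (k - length P) r))"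
proof (cases "k \<le> length P")
  case True then show ?thesis by (simp add: lev_def xcD' ycD')
next
  case False
  have "int m * int l - (xc P (length P) + int (min (k - length P) r))
     = int r - int (min (k - length P) r)"
    using Xr by (simp add: algebra_simps)
  then show ?thesis using False by (simp add: lev_def xcD' ycD')
qed
lemma nthD_lt: "k < length P \<Longrightarrow> (P @ True # replicate (m + r) False) ! k = P ! k" by (simp add: nth_append)
lemma nthD'_lt: "k < length P \<Longrightarrow> (P @ replicate r False) ! k = P ! k" by (simp add: nth_append)
lemma nthD_p: "(P @ True # replicate (m + r) False) ! length P = True" by (simp add: nth_append)
lemma nthD_gt: "length P < k \<Longrightarrow> k < length (P @ True # replicate (m + r) False) \<Longrightarrow> \<not> (P @ True # replicate (m + r) False) ! k" by (simp add: nth_append)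
lemma nthD'_ge: "length P \<le> k \<Longrightarrow> k < length (P @ replicate r False) \<Longrightarrow> \<not> (P @ replicate r False) ! k" by (simp add: nth_append)

lemma cand_same: "t < length P \<Longrightarrow> k < length P \<Longrightarrow> cand m (P @ True # replicate (m + r) False) t k \<longleftrightarrow> cand m (P @ replicate r False) t k"
proof -
  assume tk: "t < length P" "k < length P"
  have c: "corner (P @ True # replicate (m + r) False) k = corner (P @ replicate r False) k"
  proof -
    have "k - 1 < length P" using tk by simp
    then have "(P @ True # replicate (m + r) False) ! (k - 1) = P ! (k - 1)"
      "(P @ replicate r False) ! (k - 1) = P ! (k - 1)" by (simp_all add: nth_append)
    moreover have "(P @ True # replicate (m + r) False) ! k = P ! k"
      "(P @ replicate r False) ! k = P ! k" using tk by (simp_all add: nth_append)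
    ultimately show ?thesis using tk unfolding corner_def by simp
  qed
  have l1: "lev m (P @ True # replicate (m + r) False) k = lev m (P @ replicate r False) k"
    using tk by (simp add: levD levD')
  have l2: "lev m (P @ True # replicate (m + r) False) t = lev m (P @ replicate r False) t"
    using tk by (simp add: levD levD')
  show ?thesis unfolding cand_def c l1 l2 using tk by auto
qed


lemma Ptrue: "\<exists>k<length P. P ! k"
proof -
  have "filter id P \<noteq> []" using Pl l1 by auto
  then obtain x where "x \<in> set P" "x" by (auto simp: filter_empty_conv)
  then show ?thesis by (auto simp: in_set_conv_nth)
qed

lemma fuD: "first_up (P @ True # replicate (m + r) False) = first_up P"
  using first_up_append[OF Ptrue] by blast
lemma fuD': "first_up (P @ replicate r False) = first_up P"
  using first_up_append[OF Ptrue] by blast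
lemma fu_lt: "first_up P < length P"
  using LeastI_ex[OF Ptrue] unfolding first_up_def by blast

lemma bsD': "bal_steps (P @ replicate r False) = {s. s < length P \<and> P ! s \<and> s \<noteq> first_up P}"
proof -
  have "\<And>s. (s < length (P @ replicate r False) \<and> (P @ replicate r False) ! s) \<longleftrightarrow> (s < length P \<and> P ! s)"
  proof -
    fix s show "(s < length (P @ replicate r False) \<and> (P @ replicate r False) ! s) \<longleftrightarrow> (s < length P \<and> P ! s)"
      using nthD'_ge[of s] nthD'_lt[of s] by (cases "s < length P") auto
  qed
  then show ?thesis unfolding bal_steps_def fuD' by blast
qed

lemma bsD: "bal_steps (P @ True # replicate (m + r) False) = insert (length P) (bal_steps (P @ replicate r False))"
proof -
  have "\<And>s. (s < length (P @ True # replicate (m + r) False) \<and> (P @ True # replicate (m + r) False) ! s)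
     \<longleftrightarrow> (s = length P \<or> (s < length P \<and> P ! s))"
  proof -
    fix s
    consider "s < length P" | "s = length P" | "length P < s" by arith
    then show "(s < length (P @ True # replicate (m + r) False) \<and> (P @ True # replicate (m + r) False) ! s)
     \<longleftrightarrow> (s = length P \<or> (s < length P \<and> P ! s))"
      using nthD_gt[of s] nthD_lt[of s] nthD_p by cases auto
  qed
  note H = this
  show ?thesis
  proof (rule set_eqI)
    fix s
    have "s \<in> bal_steps (P @ True # replicate (m + r) False) \<longleftrightarrow>
      (s < length (P @ True # replicate (m + r) False) \<and> (P @ True # replicate (m + r) False) ! s) \<and> s \<noteq> first_up P"
      unfolding bal_steps_def fuD by blast
    also have "\<dots> \<longleftrightarrow> (s = length P \<or> (s < length P \<and> P ! s)) \<and> s \<noteq> first_up P"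
      using H[of s] by blast
    also have "\<dots> \<longleftrightarrow> s \<in> insert (length P) (bal_steps (P @ replicate r False))"
      unfolding bsD' using fu_lt by auto
    finally show "s \<in> bal_steps (P @ True # replicate (m + r) False) \<longleftrightarrow> s \<in> insert (length P) (bal_steps (P @ replicate r False))" .
  qed
qed

lemma p_notin: "length P \<notin> bal_steps (P @ replicate r False)"
  unfolding bsD' by simp

lemma corner_D_gt: "length P < k \<Longrightarrow> k \<noteq> length P + 1 \<Longrightarrow> \<not> corner (P @ True # replicate (m + r) False) k"
proof
  assume k: "length P < k" "k \<noteq> length P + 1" and c: "corner (P @ True # replicate (m + r) False) k"
  then have "k < length (P @ True # replicate (m + r) False)" by (simp add: corner_def)
  then have "\<not> (P @ True # replicate (m + r) False) ! k" "\<not> (P @ True # replicate (m + r) False) ! (k - 1)"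
    using k nthD_gt[of k] nthD_gt[of "k - 1"] by auto
  then show False using c by (simp add: corner_def)
qed

lemma corner_D_p: "\<not> P ! (length P - 1) \<Longrightarrow> corner (P @ True # replicate (m + r) False) (length P)"
proof -
  assume a: "\<not> P ! (length P - 1)"
  have "(P @ True # replicate (m + r) False) ! (length P - 1) = P ! (length P - 1)"
    using pp1 nthD_lt[of "length P - 1"] by simp
  moreover have "P \<noteq> []" using pp1 by auto
  ultimately show ?thesis using a pp1 nthD_p unfolding corner_def by simp
qed

lemma hit_p: "bal_hit m (P @ True # replicate (m + r) False) (length P) = length P + 1 + m"
proof (rule hit_eq)
  show "cand m (P @ True # replicate (m + r) False) (length P) (length P + 1 + m)"
    unfolding cand_def using m1 corner_D_gt[of "length P + 1 + m"] levP by (simp add: levD)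
  fix y assume y: "y < length P + 1 + m"
  show "\<not> cand m (P @ True # replicate (m + r) False) (length P) y"
  proof
    assume c: "cand m (P @ True # replicate (m + r) False) (length P) y"
    then have "length P < y" by (simp add: cand_def)
    moreover have "min (y - length P - 1) (m + r) = y - length P - 1" using y by simp
    ultimately show False using c y levP by (simp add: cand_def levD)
  qed
qed

lemma xc_le_X: "xc P k \<le> xc P (length P)"
proof (cases "k \<le> length P")
  case True then show ?thesis by (rule xc_mono)
next
  case False then show ?thesis using xc_ge[of P k] by simp
qed

lemma hit_rel:
  assumes t: "t \<in> bal_steps (P @ replicate r False)"
  shows "xc (P @ True # replicate (m + r) False) (bal_hit m (P @ True # replicate (m + r) False) t) + 1
       = phi (xc P (length P)) m (xc (P @ replicate r False) (bal_hit m (P @ replicate r False) t) + 1)"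
proof -
  have tp: "t < length P" "P ! t" "t \<noteq> first_up P" using t bsD' by auto
  have tl': "t < length (P @ replicate r False)" "(P @ replicate r False) ! t" using tp by (auto simp: nth_append)
  note hp = hit_props[OF m1 tl' dyck_nn[OF dD'] dyck_e0[OF dD']]
  define k0 where "k0 = bal_hit m (P @ replicate r False) t"
  have c0: "cand m (P @ replicate r False) t k0" using hp(1) k0_def by simp
  have mn0: "\<And>y. cand m (P @ replicate r False) t y \<Longrightarrow> k0 \<le> y" using hp(2) k0_def by simp
  have prev: "\<not> (P @ replicate r False) ! (k0 - 1)" using hp(3) k0_def by simp
  have nxt: "k0 < length (P @ replicate r False) \<Longrightarrow> \<not> (P @ replicate r False) ! k0" using hp(4) k0_def by simp
  have levt: "lev m (P @ True # replicate (m + r) False) t = lev m P t"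
    "lev m (P @ replicate r False) t = lev m P t" using tp by (simp_all add: levD levD')
  have k0le: "k0 \<le> length P + r" "t < k0" using c0 by (auto simp: cand_def)
  have low: "\<And>y. y < length P \<Longrightarrow> y < k0 \<Longrightarrow> \<not> cand m (P @ True # replicate (m + r) False) t y"
    using cand_same[OF tp(1)] mn0 by fastforce
  consider (a) "k0 < length P" | (b) "k0 = length P" | (c) "length P < k0" by arith
  then show ?thesis
  proof cases
    case a
    have hD: "bal_hit m (P @ True # replicate (m + r) False) t = k0"
    proof (rule hit_eq)
      show "cand m (P @ True # replicate (m + r) False) t k0" using cand_same[OF tp(1) a] c0 by simp
      fix y assume "y < k0" then show "\<not> cand m (P @ True # replicate (m + r) False) t y"
        using low a by simp
    qed
    have "\<not> P ! k0" using nxt a nthD'_lt[of k0] by simp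
    then have "xc P (Suc k0) = xc P k0 + 1" using a by (simp add: xc_Suc)
    moreover have "xc P (Suc k0) \<le> xc P (length P)" by (rule xc_le_X)
    ultimately show ?thesis unfolding hD k0_def[symmetric] using a by (simp add: xcD xcD' phi_def)
  next
    case b
    have np: "\<not> P ! (length P - 1)" using prev b pp1 nthD'_lt[of "length P - 1"] by simp
    have "lev m (P @ replicate r False) k0 = lev m (P @ replicate r False) t" using c0 by (simp add: cand_def)
    then have Lr: "lev m P t = int r" using b levt levP by (simp add: levD')
    have hD: "bal_hit m (P @ True # replicate (m + r) False) t = length P + 1 + m"
    proof (rule hit_eq)
      show "cand m (P @ True # replicate (m + r) False) t (length P + 1 + m)"
        unfolding cand_def using m1 corner_D_gt[of "length P + 1 + m"] levt Lr tp by (simp add: levD)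
      fix y assume y: "y < length P + 1 + m"
      show "\<not> cand m (P @ True # replicate (m + r) False) t y"
      proof
        assume c: "cand m (P @ True # replicate (m + r) False) t y"
        consider "y < length P" | "y = length P" | "length P < y" by arith
        then show False
        proof cases
          case 1 then show False using low b c by simp
        next
          case 2 then show False using c corner_D_p[OF np] by (simp add: cand_def)
        next
          case 3
          have "min (y - length P - 1) (m + r) = y - length P - 1" using y by simp
          then show False using c y 3 levt Lr by (simp add: cand_def levD)
        qed
      qed
    qed
    show ?thesis unfolding hD k0_def[symmetric] b by (simp add: xcD xcD' phi_def)
  next
    case c
    define j where "j = k0 - length P"
    have j: "1 \<le> j" "j \<le> r" "k0 = length P + j" using c k0le j_def by auto
    have "lev m (P @ replicate r False) k0 = lev m (P @ replicate r False) t" using c0 by (simp add: cand_def)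
    then have Lr: "lev m P t = int r - int j" using j levt by (simp add: levD')
    have hD: "bal_hit m (P @ True # replicate (m + r) False) t = length P + 1 + m + j"
    proof (rule hit_eq)
      show "cand m (P @ True # replicate (m + r) False) t (length P + 1 + m + j)"
        unfolding cand_def using m1 corner_D_gt[of "length P + 1 + m + j"] levt Lr tp j by (simp add: levD)
      fix y assume y: "y < length P + 1 + m + j"
      show "\<not> cand m (P @ True # replicate (m + r) False) t y"
      proof
        assume cy: "cand m (P @ True # replicate (m + r) False) t y"
        consider "y < length P" | "y = length P" | "length P < y" by arith
        then show False
        proof cases
          case 1 then show False using low c cy by simp
        next
          case 2
          have "lev m (P @ True # replicate (m + r) False) y = lev m (P @ True # replicate (m + r) False) t"
            using cy by (simp add: cand_def)
          then show False using 2 levt Lr levP j by (simp add: levD)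
        next
          case 3
          have "min (y - length P - 1) (m + r) = y - length P - 1" using y j by simp
          then show False using cy y 3 levt Lr by (simp add: cand_def levD)
        qed
      qed
    qed
    show ?thesis unfolding hD k0_def[symmetric] using j by (simp add: xcD xcD' phi_def)
  qed
qed

lemma X0: "0 \<le> xc P (length P)" by (simp add: xc_def)
lemma Xle: "xc P (length P) \<le> int (m * l)" using Xr by simp

lemma fin_bs': "finite (bal_steps (P @ replicate r False))"
  unfolding bsD' by (rule finite_subset[of _ "{..<length P}"]) auto

lemma rtnD: "rtn m (P @ True # replicate (m + r) False)
   = insert (xc P (length P), xc P (length P) + int m + 1) (phip (xc P (length P)) m ` rtn m (P @ replicate r False))"
proof -
  have l0: "bal_label m (P @ True # replicate (m + r) False) (length P) = (xc P (length P), xc P (length P) + int m + 1)"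
    unfolding bal_label_def hit_p by (simp add: xcD)
  have l1: "\<And>t. t \<in> bal_steps (P @ replicate r False) \<Longrightarrow>
     bal_label m (P @ True # replicate (m + r) False) t = phip (xc P (length P)) m (bal_label m (P @ replicate r False) t)"
  proof -
    fix t assume t: "t \<in> bal_steps (P @ replicate r False)"
    then have tp: "t < length P" using bsD' by auto
    have "phi (xc P (length P)) m (xc P t) = xc P t" using xc_le_X[of t] by (simp add: phi_def)
    then show "bal_label m (P @ True # replicate (m + r) False) t = phip (xc P (length P)) m (bal_label m (P @ replicate r False) t)"
      unfolding bal_label_def phip_def using hit_rel[OF t] tp by (simp add: xcD xcD')
  qed
  have "bal_label m (P @ True # replicate (m + r) False) ` bal_steps (P @ replicate r False)
     = phip (xc P (length P)) m ` bal_label m (P @ replicate r False) ` bal_steps (P @ replicate r False)"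
    using l1 by (simp add: image_image cong: image_cong)
  then show ?thesis unfolding rtn_def bsD using l0 by simp
qed

lemma upD: "up_D (P @ True # replicate (m + r) False) v = up_D (P @ replicate r False) v + (if v = xc P (length P) then 1 else 0)"
proof -
  define A where "A = {k. k < length P \<and> P ! k \<and> xc P k = v \<and> 0 < yc P k}"
  have fA: "finite A" unfolding A_def by (rule finite_subset[of _ "{..<length P}"]) auto
  have "{k. k < length (P @ replicate r False) \<and> (P @ replicate r False) ! k \<and> xc (P @ replicate r False) k = v \<and> 0 < yc (P @ replicate r False) k} = A"
  proof (rule set_eqI)
    fix k show "k \<in> {k. k < length (P @ replicate r False) \<and> (P @ replicate r False) ! k \<and> xc (P @ replicate r False) k = v \<and> 0 < yc (P @ replicate r False) k} \<longleftrightarrow> k \<in> A"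
      unfolding A_def using nthD'_ge[of k] nthD'_lt[of k] by (cases "k < length P") (auto simp: xcD' ycD')
  qed
  moreover have "{k. k < length (P @ True # replicate (m + r) False) \<and> (P @ True # replicate (m + r) False) ! k \<and> xc (P @ True # replicate (m + r) False) k = v \<and> 0 < yc (P @ True # replicate (m + r) False) k}
     = (if v = xc P (length P) then insert (length P) A else A)"
  proof (rule set_eqI)
    fix k
    consider "k < length P" | "k = length P" | "length P < k" by arith
    then show "k \<in> {k. k < length (P @ True # replicate (m + r) False) \<and> (P @ True # replicate (m + r) False) ! k \<and> xc (P @ True # replicate (m + r) False) k = v \<and> 0 < yc (P @ True # replicate (m + r) False) k}
      \<longleftrightarrow> k \<in> (if v = xc P (length P) then insert (length P) A else A)"
      unfolding A_def using nthD_gt[of k] nthD_lt[of k] nthD_p YP l1 by cases (auto simp: xcD ycD)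
  qed
  moreover have "length P \<notin> A" unfolding A_def by simp
  ultimately show ?thesis unfolding up_D_def using fA by simp
qed

lemma upD'_big: "xc P (length P) < w \<Longrightarrow> up_D (P @ replicate r False) w = 0"
proof -
  assume w: "xc P (length P) < w"
  have "{k. k < length (P @ replicate r False) \<and> (P @ replicate r False) ! k \<and> xc (P @ replicate r False) k = w \<and> 0 < yc (P @ replicate r False) k} = {}"
  proof (rule equals0I)
    fix k assume "k \<in> {k. k < length (P @ replicate r False) \<and> (P @ replicate r False) ! k \<and> xc (P @ replicate r False) k = w \<and> 0 < yc (P @ replicate r False) k}"
    then show False using nthD'_ge[of k] xc_le_X[of k] w by (cases "k < length P") (auto simp: xcD')
  qed
  then show ?thesis unfolding up_D_def by simp
qed

lemma balD: "bal_D m (P @ True # replicate (m + r) False) v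
   = (if v = xc P (length P) + int m + 1 then 1 else 0)
     + card {t \<in> bal_steps (P @ replicate r False). phi (xc P (length P)) m (xc (P @ replicate r False) (bal_hit m (P @ replicate r False) t) + 1) = v}"
proof -
  define B where "B = {t \<in> bal_steps (P @ replicate r False). phi (xc P (length P)) m (xc (P @ replicate r False) (bal_hit m (P @ replicate r False) t) + 1) = v}"
  have fB: "finite B" unfolding B_def using fin_bs' by simp
  have hp: "xc (P @ True # replicate (m + r) False) (bal_hit m (P @ True # replicate (m + r) False) (length P)) = xc P (length P) + int m"
    unfolding hit_p by (simp add: xcD)
  have "{s \<in> bal_steps (P @ True # replicate (m + r) False). xc (P @ True # replicate (m + r) False) (bal_hit m (P @ True # replicate (m + r) False) s) = v - 1}
    = (if v = xc P (length P) + int m + 1 then insert (length P) B else B)"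
  proof (rule set_eqI)
    fix s
    show "s \<in> {s \<in> bal_steps (P @ True # replicate (m + r) False). xc (P @ True # replicate (m + r) False) (bal_hit m (P @ True # replicate (m + r) False) s) = v - 1}
      \<longleftrightarrow> s \<in> (if v = xc P (length P) + int m + 1 then insert (length P) B else B)"
    proof (cases "s = length P")
      case True
      then show ?thesis using hp p_notin unfolding bsD B_def by auto
    next
      case False
      have "s \<in> bal_steps (P @ replicate r False) \<Longrightarrow> (xc (P @ True # replicate (m + r) False) (bal_hit m (P @ True # replicate (m + r) False) s) = v - 1
         \<longleftrightarrow> phi (xc P (length P)) m (xc (P @ replicate r False) (bal_hit m (P @ replicate r False) s) + 1) = v)"
        using hit_rel[of s] by linarith
      then show ?thesis using False unfolding bsD B_def by auto
    qed
  qed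
  moreover have "length P \<notin> B" unfolding B_def using p_notin by simp
  ultimately show ?thesis unfolding bal_D_def B_def[symmetric] using fB by simp
qed

lemma balD': "bal_D m (P @ replicate r False) w
   = card {t \<in> bal_steps (P @ replicate r False). xc (P @ replicate r False) (bal_hit m (P @ replicate r False) t) + 1 = w}"
  unfolding bal_D_def by (rule arg_cong[where f=card]) auto

lemma step:
  assumes IH1: "\<forall>C\<in>cells (m * l + 2) (rtn m (P @ replicate r False)). card C = m + 2"
    and IH2: "\<forall>w. 0 \<le> w \<and> w \<le> int (m * l + 1) \<longrightarrow>
       card {C \<in> cells (m * l + 2) (rtn m (P @ replicate r False)). w \<in> C}
         = up_D (P @ replicate r False) w + bal_D m (P @ replicate r False) w + 1"
  shows "\<forall>C\<in>cells (m * Suc l + 2) (rtn m (P @ True # replicate (m + r) False)). card C = m + 2"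
    and "\<forall>v. 0 \<le> v \<and> v \<le> int (m * Suc l + 1) \<longrightarrow>
       card {C \<in> cells (m * Suc l + 2) (rtn m (P @ True # replicate (m + r) False)). v \<in> C}
         = up_D (P @ True # replicate (m + r) False) v + bal_D m (P @ True # replicate (m + r) False) v + 1"
proof -
  define X where "X = xc P (length P)"
  have N: "m * Suc l + 2 = (m * l + 2) + m" by simp
  have aN: "X + 1 < int (m * l + 2)" using Xle X_def by simp
  have a0: "0 \<le> X" using X0 X_def by simp
  note ec = ear_count[OF m1 a0 aN IH1]
  show "\<forall>C\<in>cells (m * Suc l + 2) (rtn m (P @ True # replicate (m + r) False)). card C = m + 2"
    unfolding N rtnD X_def[symmetric] by (rule ec(1))
  show "\<forall>v. 0 \<le> v \<and> v \<le> int (m * Suc l + 1) \<longrightarrow>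
       card {C \<in> cells (m * Suc l + 2) (rtn m (P @ True # replicate (m + r) False)). v \<in> C}
         = up_D (P @ True # replicate (m + r) False) v + bal_D m (P @ True # replicate (m + r) False) v + 1"
  proof (intro allI impI)
    fix v assume v: "0 \<le> v \<and> v \<le> int (m * Suc l + 1)"
    define g where "g = (\<lambda>t. xc (P @ replicate r False) (bal_hit m (P @ replicate r False) t) + 1)"
    have bD: "bal_D m (P @ True # replicate (m + r) False) v = (if v = X + int m + 1 then 1 else 0) + card {t \<in> bal_steps (P @ replicate r False). phi X m (g t) = v}"
      using balD X_def g_def by simp
    have bD': "\<And>w. bal_D m (P @ replicate r False) w = card {t \<in> bal_steps (P @ replicate r False). g t = w}"
      using balD' g_def by simp
    have uD: "up_D (P @ True # replicate (m + r) False) v = up_D (P @ replicate r False) v + (if v = X then 1 else 0)"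
      using upD X_def by simp
    consider (mid) "X < v \<and> v < X + int m + 1" | (lo) "v \<le> X" | (hi) "X + int m + 1 \<le> v" by linarith
    then show "card {C \<in> cells (m * Suc l + 2) (rtn m (P @ True # replicate (m + r) False)). v \<in> C}
         = up_D (P @ True # replicate (m + r) False) v + bal_D m (P @ True # replicate (m + r) False) v + 1"
    proof cases
      case mid
      have c: "card {C \<in> cells (m * Suc l + 2) (rtn m (P @ True # replicate (m + r) False)). v \<in> C} = 1"
        unfolding N rtnD X_def[symmetric] using ec(3) mid by blast
      have "\<And>t. phi X m (g t) \<noteq> v" using mid by (auto simp: phi_def)
      then have "bal_D m (P @ True # replicate (m + r) False) v = 0" using bD mid by simp
      moreover have "up_D (P @ True # replicate (m + r) False) v = 0" using uD upD'_big[of v] mid X_def by simp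
      ultimately show ?thesis using c by simp
    next
      case lo
      have pv: "phi X m v = v" using lo by (simp add: phi_def)
      have c: "card {C \<in> cells (m * Suc l + 2) (rtn m (P @ True # replicate (m + r) False)). v \<in> C}
         = (if v = X \<or> v = X + 1 then 1 else 0) + card {C \<in> cells (m * l + 2) (rtn m (P @ replicate r False)). v \<in> C}"
        unfolding N rtnD X_def[symmetric] using ec(2)[of v] pv by simp
      have "v \<le> int (m * l + 1)" using lo Xle X_def by simp
      then have c': "card {C \<in> cells (m * l + 2) (rtn m (P @ replicate r False)). v \<in> C}
         = up_D (P @ replicate r False) v + bal_D m (P @ replicate r False) v + 1" using IH2 v by blast
      have "{t \<in> bal_steps (P @ replicate r False). phi X m (g t) = v} = {t \<in> bal_steps (P @ replicate r False). g t = v}"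
        using pv phi_eq[of X m _ v] by metis
      then have "bal_D m (P @ True # replicate (m + r) False) v = bal_D m (P @ replicate r False) v"
        using bD bD' lo by simp
      then show ?thesis using c c' uD lo by simp
    next
      case hi
      define w where "w = v - int m"
      have pw: "phi X m w = v" using hi m1 by (simp add: phi_def w_def)
      have w1: "X < w" using hi m1 w_def by simp
      have c: "card {C \<in> cells (m * Suc l + 2) (rtn m (P @ True # replicate (m + r) False)). v \<in> C}
         = (if w = X \<or> w = X + 1 then 1 else 0) + card {C \<in> cells (m * l + 2) (rtn m (P @ replicate r False)). w \<in> C}"
        unfolding N rtnD X_def[symmetric] using ec(2)[of w] pw by simp
      have "0 \<le> w \<and> w \<le> int (m * l + 1)" using v w1 a0 w_def by simp
      then have c': "card {C \<in> cells (m * l + 2) (rtn m (P @ replicate r False)). w \<in> C}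
         = up_D (P @ replicate r False) w + bal_D m (P @ replicate r False) w + 1" using IH2 by blast
      have "{t \<in> bal_steps (P @ replicate r False). phi X m (g t) = v} = {t \<in> bal_steps (P @ replicate r False). g t = w}"
        using pw phi_eq[of X m _ w] by metis
      then have "bal_D m (P @ True # replicate (m + r) False) v = (if v = X + int m + 1 then 1 else 0) + bal_D m (P @ replicate r False) w"
        using bD bD' by simp
      moreover have "up_D (P @ True # replicate (m + r) False) v = 0" using uD upD'_big[of v] hi m1 X_def by simp
      moreover have "up_D (P @ replicate r False) w = 0" using upD'_big[of w] w1 X_def by simp
      moreover have "(w = X \<or> w = X + 1) \<longleftrightarrow> v = X + int m + 1" using w1 w_def by auto
      ultimately show ?thesis using c c' by simp
    qed
  qed
qed
end


lemma cells_empty: "cells N {} = {{0..<int N}}"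
proof (rule set_eqI)
  fix S
  have u: "\<And>X. unsep {} X" unfolding unsep_def by simp
  show "S \<in> cells N {} \<longleftrightarrow> S \<in> {{0..<int N}}"
  proof
    assume "S \<in> cells N {}"
    then have "S \<subseteq> {0..<int N}" "\<And>S'. S \<subseteq> S' \<Longrightarrow> S' \<subseteq> {0..<int N} \<Longrightarrow> S' = S"
      using u unfolding cells_def by blast+
    then show "S \<in> {{0..<int N}}" by blast
  next
    assume "S \<in> {{0..<int N}}"
    then show "S \<in> cells N {}" using u unfolding cells_def by blast
  qed
qed

lemma base_case:
  assumes m1: "1 \<le> m" and d: "dyck_path m 1 D"
  shows "\<forall>C\<in>cells (m * 1 + 2) (rtn m D). card C = m + 2"
    and "\<forall>v. 0 \<le> v \<and> v \<le> int (m * 1 + 1) \<longrightarrow>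
       card {C \<in> cells (m * 1 + 2) (rtn m D). v \<in> C} = up_D D v + bal_D m D v + 1"
proof -
  have c1: "length (filter id D) = 1" using d by (simp add: dyck_path_def)
  then have "D \<noteq> []" by auto
  then obtain b Q where DQ: "D = b # Q" by (cases D) auto
  have "xc D 1 \<le> int m * yc D 1" using d DQ by (auto simp: dyck_path_def)
  then have b: "b" using DQ by (cases b) (auto simp: xc_def yc_def)
  then have "length (filter id Q) = 0" using c1 DQ by simp
  then have Qf: "\<forall>x\<in>set Q. \<not> x" by (auto simp: filter_empty_conv)
  have fu: "first_up D = 0" unfolding first_up_def using DQ b by (intro Least_equality) auto
  have bs: "bal_steps D = {}"
  proof (rule equals0I)
    fix s assume "s \<in> bal_steps D"
    then have "s < length D" "D ! s" "s \<noteq> 0" using fu by (auto simp: bal_steps_def)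
    then obtain s' where s': "s = Suc s'" "s' < length Q" using DQ by (cases s) auto
    have "Q ! s' \<in> set Q" by (rule nth_mem[OF s'(2)])
    moreover have "Q ! s'" using \<open>D ! s\<close> s' DQ by simp
    ultimately show False using Qf by blast
  qed
  have rt: "rtn m D = {}" unfolding rtn_def bs by simp
  show "\<forall>C\<in>cells (m * 1 + 2) (rtn m D). card C = m + 2" unfolding rt cells_empty by simp
  have up: "\<And>v. up_D D v = 0"
  proof -
    fix v
    have "{k. k < length D \<and> D ! k \<and> xc D k = v \<and> yc D k > 0} = {}"
    proof (rule equals0I)
      fix k assume k: "k \<in> {k. k < length D \<and> D ! k \<and> xc D k = v \<and> yc D k > 0}"
      have "k = 0"
      proof (rule ccontr)
        assume "k \<noteq> 0"
        then obtain k' where k': "k = Suc k'" "k' < length Q" using k DQ by (cases k) auto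
        have "Q ! k' \<in> set Q" by (rule nth_mem[OF k'(2)])
        moreover have "Q ! k'" using k k' DQ by simp
        ultimately show False using Qf by blast
      qed
      then show False using k by (simp add: yc_def)
    qed
    then show "up_D D v = 0" unfolding up_D_def by simp
  qed
  have bl: "\<And>v. bal_D m D v = 0" unfolding bal_D_def bs by simp
  show "\<forall>v. 0 \<le> v \<and> v \<le> int (m * 1 + 1) \<longrightarrow>
       card {C \<in> cells (m * 1 + 2) (rtn m D). v \<in> C} = up_D D v + bal_D m D v + 1"
  proof (intro allI impI)
    fix v :: int assume v: "0 \<le> v \<and> v \<le> int (m * 1 + 1)"
    have "{C \<in> {{0..<int (m * 1 + 2)}}. v \<in> C} = {{0..<int (m * 1 + 2)}}" using v by auto
    then show "card {C \<in> cells (m * 1 + 2) (rtn m D). v \<in> C} = up_D D v + bal_D m D v + 1"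
      unfolding rt cells_empty up bl by simp
  qed
qed

lemma main:
  assumes m1: "1 \<le> m" and l1: "1 \<le> l"
  shows "dyck_path m l D \<Longrightarrow> (\<forall>C\<in>cells (m * l + 2) (rtn m D). card C = m + 2) \<and>
    (\<forall>v. 0 \<le> v \<and> v \<le> int (m * l + 1) \<longrightarrow>
       card {C \<in> cells (m * l + 2) (rtn m D). v \<in> C} = up_D D v + bal_D m D v + 1)"
  using l1
proof (induction l arbitrary: D rule: nat_induct_at_least)
  case base
  then show ?case using base_case[OF m1] by blast
next
  case (Suc l)
  have d: "dyck_path m (Suc l) D" by fact
  have cT: "length (filter id D) = Suc l" and cF: "length (filter Not D) = m * Suc l"
    and cond: "\<forall>k \<le> length D. xc D k \<le> int m * yc D k" using d by (auto simp: dyck_path_def)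
  have "filter id D \<noteq> []" using cT by auto
  then have "True \<in> set D" by (auto simp: filter_empty_conv)
  then obtain P Z where DPZ: "D = P @ True # Z" and Zt: "True \<notin> set Z" using split_list_last by metis
  have Zf: "\<forall>x\<in>set Z. \<not> x" using Zt by auto
  have Zr: "Z = replicate (length Z) False" using Zf replicate_length_same[of Z False] by auto
  have "filter id Z = []" using Zf by (simp add: filter_empty_conv)
  then have Pl: "length (filter id P) = l" using cT DPZ by simp
  define X where "X = length (filter Not P)"
  have xP: "xc P (length P) = int X" unfolding X_def by (simp add: xc_len)
  have "xc D (length P) \<le> int m * yc D (length P)" using cond DPZ by simp
  moreover have "xc D (length P) = xc P (length P)" "yc D (length P) = yc P (length P)"
    unfolding DPZ by (simp_all add: xc_append yc_append xc_def yc_def)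
  moreover have "yc P (length P) = int l" using Pl by (simp add: yc_len)
  ultimately have Xle: "X \<le> m * l" using xP by (metis of_nat_le_iff of_nat_mult)
  from Zf have fZ: "filter Not Z = Z" by (simp add: filter_True)
  have lenZ: "X + length Z = m * Suc l" using cF fZ unfolding DPZ X_def by simp
  define r where "r = length Z - m"
  have lZ: "length Z = m + r" using lenZ Xle r_def by simp
  have Zr': "Z = replicate (m + r) False" using Zr lZ by simp
  have D_eq: "D = P @ True # replicate (m + r) False" using DPZ Zr' by simp
  have Xr: "X + r = m * l" using lenZ lZ by simp
  have dD': "dyck_path m l (P @ replicate r False)"
    unfolding dyck_path_def
  proof (intro conjI allI impI)
    show "length (filter id (P @ replicate r False)) = l" using Pl by simp
    show "length (filter Not (P @ replicate r False)) = m * l" using Xr X_def by simp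
    fix k assume k: "k \<le> length (P @ replicate r False)"
    show "xc (P @ replicate r False) k \<le> int m * yc (P @ replicate r False) k"
    proof (cases "k \<le> length P")
      case True
      have "xc D k \<le> int m * yc D k" using cond DPZ True by simp
      moreover have "xc D k = xc P k" "yc D k = yc P k" "xc (P @ replicate r False) k = xc P k"
        "yc (P @ replicate r False) k = yc P k"
        unfolding DPZ using True by (simp_all add: xc_append yc_append xc_rep yc_rep xc_def yc_def)
      ultimately show ?thesis by simp
    next
      case False
      have "xc (P @ replicate r False) k = int X + int (min (k - length P) r)"
        using False xc_ge[of P k] xP by (simp add: xc_append xc_rep)
      moreover have "yc (P @ replicate r False) k = int l"
        using False yc_ge[of P k] Pl by (simp add: yc_append yc_rep yc_len)
      moreover have "X + min (k - length P) r \<le> m * l" using Xr by simp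
      then have "int (X + min (k - length P) r) \<le> int (m * l)" by (simp only: of_nat_le_iff)
      then have "int X + int (min (k - length P) r) \<le> int (m * l)" by simp
      ultimately show ?thesis by simp
    qed
  qed
  have IH: "(\<forall>C\<in>cells (m * l + 2) (rtn m (P @ replicate r False)). card C = m + 2) \<and>
    (\<forall>v. 0 \<le> v \<and> v \<le> int (m * l + 1) \<longrightarrow>
       card {C \<in> cells (m * l + 2) (rtn m (P @ replicate r False)). v \<in> C}
        = up_D (P @ replicate r False) v + bal_D m (P @ replicate r False) v + 1)"
    using Suc.IH dD' by blast
  note st = step[OF m1 Suc.hyps(1) dD' IH[THEN conjunct1] IH[THEN conjunct2]]
  show ?case unfolding D_eq using st by blast
qed

theorem proposition5p7:
  fixes m l :: nat and D :: "bool list" and i :: int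
  assumes "1 \<le> m" and "1 \<le> l" and "dyck_path m l D"
    and "0 \<le> i" and "i \<le> int (m * l + 1)"
  shows "frieze (m * l + 2) (rtn m D) (i - 1) (i + 1)
           = real (up_D D i + bal_D m D i + 1) * lam (m + 2)"
proof -
  note M = main[OF assms(1,2,3)]
  define N where "N = m * l + 2"
  define T where "T = rtn m D"
  have fr: "frieze N T (i - 1) (i + 1) = quiddity N T i"
  proof -
    have e: "nat (i + 1 - (i - 1)) = Suc (Suc 0)" by simp
    have "frieze N T (i - 1) (i + 1) = frieze_aux (quiddity N T) (i - 1) (Suc (Suc 0))"
      unfolding frieze_def e by (rule refl)
    also have "\<dots> = quiddity N T i" by (simp only: frieze_aux.simps) simp
    finally show ?thesis .
  qed
  have im: "i mod int N = i" using assms(4,5) N_def by simp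
  have sz: "\<forall>C\<in>cells N T. card C = m + 2" using M N_def T_def by simp
  have cnt: "card {C \<in> cells N T. i \<in> C} = up_D D i + bal_D m D i + 1" using M assms(4,5) N_def T_def by simp
  have mu: "\<And>p. mu N T p i = (if p = m + 2 then up_D D i + bal_D m D i + 1 else 0)"
  proof -
    fix p
    show "mu N T p i = (if p = m + 2 then up_D D i + bal_D m D i + 1 else 0)"
    proof (cases "p = m + 2")
      case True
      have "{C \<in> cells N T. card C = p \<and> i \<in> C} = {C \<in> cells N T. i \<in> C}" using sz True by auto
      then show ?thesis unfolding mu_def using cnt True by simp
    next
      case False
      have E: "{C \<in> cells N T. card C = p \<and> i \<in> C} = {}" using sz False by auto
      show ?thesis unfolding mu_def E using False by simp
    qed
  qed
  have "m \<le> m * l" using assms(2) by simp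
  then have mem: "m + 2 \<in> {3..N}" using assms(1) N_def by simp
  have "quiddity N T i = (\<Sum>p\<in>{3..N}. (if p = m + 2 then real (up_D D i + bal_D m D i + 1) * lam p else 0))"
    unfolding quiddity_def im using mu by (intro sum.cong) auto
  also have "\<dots> = real (up_D D i + bal_D m D i + 1) * lam (m + 2)"
    using mem by (simp add: sum.delta)
  finally show ?thesis using fr N_def T_def by simp
qed

end
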